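(* Let $v\ge 2$ be an integer and $\theta\in[0,1]$. In the tipsy cop and drunken robber game on the complete graph $K_v$ with cop and robber starting at distinct vertices, let $X$ be the capture time measured in rounds, where a round consists of one robber move followed by one cop move (so $X=n$ if the capture occurs during the $n$-th round). Then \[ \mathbb{E}[X]=\frac{1}{\frac{1}{v-1}+\frac{v-2}{v-1}\left(\frac{1}{v-1}\theta+1-\theta\right)}=\frac{(v-1)^2}{(v-1)^2-\theta(v-2)^2}. \]
   Context: Tipsy cop and drunken robber game on a finite connected graph $G$: a cop and a robber are placed at distinct vertices. Moves are numbered $1,2,3,\dots$; the robber makes the odd-numbered moves and the cop the even-numbered moves, and on each move the mover must move to a vertex adjacent to its current vertex (staying put is not allowed). The robber always moves to a neighbor chosen uniformly at random. The cop, independently at each of her moves, with probability $\theta$ moves to a neighbor chosen uniformly at random, and with probability $1-\theta$ makes a directed move to a neighbor lying on a shortest path to the robber's current vertex (in particular onto the robber's vertex if it is adjacent). All random choices are independent. The robber is captured (and the game ends) as soon as both occupy the same vertex, whether the robber moves onto the cop or the cop moves onto the robber. *)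

theory Defs
  imports "HOL-Probability.Probability"
begin

text \<open>A finite graph is given by a vertex set V and an adjacency predicate E
(assumed symmetric and irreflexive where relevant).\<close>

definition nbrs :: "'a set \<Rightarrow> ('a \<Rightarrow> 'a \<Rightarrow> bool) \<Rightarrow> 'a \<Rightarrow> 'a set" where
  "nbrs V E x = {y \<in> V. E x y}"

definition edge_rel :: "'a set \<Rightarrow> ('a \<Rightarrow> 'a \<Rightarrow> bool) \<Rightarrow> ('a \<times> 'a) set" where
  "edge_rel V E = {(a, b). a \<in> V \<and> b \<in> V \<and> E a b}"

definition gdist :: "'a set \<Rightarrow> ('a \<Rightarrow> 'a \<Rightarrow> bool) \<Rightarrow> 'a \<Rightarrow> 'a \<Rightarrow> nat" where
  "gdist V E x y = (LEAST n. (x, y) \<in> edge_rel V E ^^ n)"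

definition toward :: "'a set \<Rightarrow> ('a \<Rightarrow> 'a \<Rightarrow> bool) \<Rightarrow> 'a \<Rightarrow> 'a \<Rightarrow> 'a set" where
  "toward V E c r = {y \<in> nbrs V E c. gdist V E y r + 1 = gdist V E c r}"

text \<open>State Some (cop, robber); None = captured.\<close>
definition round_step :: "'a set \<Rightarrow> ('a \<Rightarrow> 'a \<Rightarrow> bool) \<Rightarrow> real \<Rightarrow> 'a \<times> 'a \<Rightarrow> ('a \<times> 'a) option pmf" where
  "round_step V E \<theta> s = (case s of (c, r) \<Rightarrow>
     do { r' \<leftarrow> pmf_of_set (nbrs V E r);
          if r' = c then return_pmf None
          else do { b \<leftarrow> bernoulli_pmf \<theta>;
                    c' \<leftarrow> (if b then pmf_of_set (nbrs V E c) else pmf_of_set (toward V E c r'));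
                    return_pmf (if c' = r' then None else Some (c', r')) } })"

primrec state_after :: "'a set \<Rightarrow> ('a \<Rightarrow> 'a \<Rightarrow> bool) \<Rightarrow> real \<Rightarrow> 'a \<times> 'a \<Rightarrow> nat \<Rightarrow> ('a \<times> 'a) option pmf" where
  "state_after V E \<theta> s 0 = return_pmf (Some s)"
| "state_after V E \<theta> s (Suc n) =
     state_after V E \<theta> s n \<bind> (\<lambda>st. case st of None \<Rightarrow> return_pmf None | Some t \<Rightarrow> round_step V E \<theta> t)"

text \<open>P(X \<le> n): probability that capture has occurred within the first n rounds.\<close>
definition captured_by :: "'a set \<Rightarrow> ('a \<Rightarrow> 'a \<Rightarrow> bool) \<Rightarrow> real \<Rightarrow> 'a \<times> 'a \<Rightarrow> nat \<Rightarrow> real" where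
  "captured_by V E \<theta> s n = pmf (state_after V E \<theta> s n) None"

text \<open>P(X = n): probability that capture occurs during round n (n \<ge> 1).\<close>
definition capture_time_prob :: "'a set \<Rightarrow> ('a \<Rightarrow> 'a \<Rightarrow> bool) \<Rightarrow> real \<Rightarrow> 'a \<times> 'a \<Rightarrow> nat \<Rightarrow> real" where
  "capture_time_prob V E \<theta> s n =
     (if n = 0 then 0 else captured_by V E \<theta> s n - captured_by V E \<theta> s (n - 1))"

definition K_V :: "nat \<Rightarrow> nat set" where "K_V v = {0..<v}"
definition K_E :: "nat \<Rightarrow> nat \<Rightarrow> bool" where "K_E x y = (x \<noteq> y)"

end

theory Submission
  imports Defs
begin

lemma gdist_self: "gdist V E x x = 0"
  unfolding gdist_def by (rule Least_eq_0) simp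

lemma gdist_K:
  assumes "x \<in> K_V v" "y \<in> K_V v" "x \<noteq> y"
  shows "gdist (K_V v) K_E x y = 1"
  unfolding gdist_def
proof (rule Least_equality)
  show "(x, y) \<in> edge_rel (K_V v) K_E ^^ 1"
    using assms by (simp add: edge_rel_def K_E_def)
next
  fix n assume "(x, y) \<in> edge_rel (K_V v) K_E ^^ n"
  then show "1 \<le> n" using assms by (cases n) auto
qed

lemma nbrs_K: "nbrs (K_V v) K_E x = K_V v - {x}"
  by (auto simp: nbrs_def K_E_def)

lemma toward_K:
  assumes "c \<in> K_V v" "r \<in> K_V v" "c \<noteq> r"
  shows "toward (K_V v) K_E c r = {r}"
proof -
  have "y \<in> toward (K_V v) K_E c r \<longleftrightarrow> y = r" for y
  proof
    assume h: "y \<in> toward (K_V v) K_E c r"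
    hence y: "y \<in> K_V v" "y \<noteq> c" by (auto simp: toward_def nbrs_K)
    have "gdist (K_V v) K_E y r + 1 = 1" using h gdist_K[OF assms] by (simp add: toward_def)
    thus "y = r" using gdist_K[OF y(1) assms(2)] by fastforce
  next
    assume "y = r" thus "y \<in> toward (K_V v) K_E c r"
      using assms gdist_K[OF assms] by (simp add: toward_def nbrs_K gdist_self)
  qed
  thus ?thesis by blast
qed

definition pK :: "nat \<Rightarrow> real \<Rightarrow> real" where
  "pK v \<theta> = 1 / (real v - 1) + (real v - 2) / (real v - 1) * (1 / (real v - 1) * \<theta> + 1 - \<theta>)"

definition GK :: "nat \<Rightarrow> (nat \<times> nat) set" where
  "GK v = {(a, b). a \<in> K_V v \<and> b \<in> K_V v \<and> a \<noteq> b}"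

lemma card_nbrs:
  assumes "x \<in> K_V v" shows "card (nbrs (K_V v) K_E x) = v - 1"
  using assms unfolding nbrs_K by (simp add: K_V_def)

lemma nbrs_ne:
  assumes "x \<in> K_V v" "v \<ge> 2" shows "nbrs (K_V v) K_E x \<noteq> {}" "finite (nbrs (K_V v) K_E x)"
proof -
  show "finite (nbrs (K_V v) K_E x)" unfolding nbrs_K by (simp add: K_V_def)
  have "card (nbrs (K_V v) K_E x) > 0" using card_nbrs[OF assms(1)] assms(2) by simp
  thus "nbrs (K_V v) K_E x \<noteq> {}" by auto
qed

lemma step_K:
  assumes v: "v \<ge> 2" and th: "0 \<le> \<theta>" "\<theta> \<le> 1" and t: "(c, r) \<in> GK v"
  shows "pmf (round_step (K_V v) K_E \<theta> (c, r)) None = pK v \<theta>"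
    and "set_pmf (round_step (K_V v) K_E \<theta> (c, r)) \<subseteq> insert None (Some ` GK v)"
proof -
  have c: "c \<in> K_V v" and r: "r \<in> K_V v" and cr: "c \<noteq> r" using t by (auto simp: GK_def)
  define S where "S = nbrs (K_V v) K_E r"
  define inner where "inner = (\<lambda>r'. do { b \<leftarrow> bernoulli_pmf \<theta>;
                    c' \<leftarrow> (if b then pmf_of_set (nbrs (K_V v) K_E c) else pmf_of_set (toward (K_V v) K_E c r'));
                    return_pmf (if c' = r' then None else Some (c', r')) })"
  have rs: "round_step (K_V v) K_E \<theta> (c, r) =
     pmf_of_set S \<bind> (\<lambda>r'. if r' = c then return_pmf None else inner r')"
    unfolding round_step_def S_def inner_def by simp
  have Sfin: "finite S" "S \<noteq> {}" using nbrs_ne[OF r v] by (auto simp: S_def)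
  have cS: "c \<in> S" using c cr by (simp add: S_def nbrs_K)
  have cardS: "card S = v - 1" using card_nbrs[OF r] by (simp add: S_def)
  have Nc: "finite (nbrs (K_V v) K_E c)" "nbrs (K_V v) K_E c \<noteq> {}" using nbrs_ne[OF c v] by auto
  have cardNc: "card (nbrs (K_V v) K_E c) = v - 1" using card_nbrs[OF c] .
  have inner_eq: "inner r' = bernoulli_pmf \<theta> \<bind> (\<lambda>b. if b then
        map_pmf (\<lambda>c'. if c' = r' then None else Some (c', r')) (pmf_of_set (nbrs (K_V v) K_E c))
        else return_pmf None)" if "r' \<in> S" "r' \<noteq> c" for r'
  proof -
    have r'K: "r' \<in> K_V v" using that by (simp add: S_def nbrs_K)
    have "toward (K_V v) K_E c r' = {r'}" using toward_K[OF c r'K] that(2) by simp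
    thus ?thesis unfolding inner_def
      by (intro bind_pmf_cong refl) (auto simp: pmf_of_set_singleton map_pmf_def bind_return_pmf)
  qed
  have inner_pmf: "pmf (inner r') None = \<theta> / (real v - 1) + (1 - \<theta>)" if "r' \<in> S" "r' \<noteq> c" for r'
  proof -
    have m: "pmf (map_pmf (\<lambda>c'. if c' = r' then None else Some (c', r')) (pmf_of_set (nbrs (K_V v) K_E c))) None
        = 1 / (real v - 1)"
    proof -
      have "(\<lambda>c'. if c' = r' then None else Some (c', r')) -` {None} = {r'}" by (auto split: if_splits)
      moreover have "r' \<in> nbrs (K_V v) K_E c" using that by (auto simp: S_def nbrs_K)
      ultimately show ?thesis using Nc cardNc v
        by (simp add: pmf_map measure_pmf_of_set Int_absorb1 of_nat_diff)
    qed
    show ?thesis using inner_eq[OF that] th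
      by (simp add: pmf_bind m)
  qed
  have "pmf (round_step (K_V v) K_E \<theta> (c, r)) None =
      (\<Sum>r'\<in>S. pmf (if r' = c then return_pmf None else inner r') None) / card S"
    unfolding rs pmf_bind using Sfin by (simp add: integral_pmf_of_set)
  also have "(\<Sum>r'\<in>S. pmf (if r' = c then return_pmf None else inner r') None)
      = 1 + (\<Sum>r'\<in>S - {c}. \<theta> / (real v - 1) + (1 - \<theta>))"
    using Sfin cS by (simp add: sum.remove inner_pmf)
  also have "\<dots> = 1 + (real v - 2) * (\<theta> / (real v - 1) + (1 - \<theta>))"
    using Sfin cS cardS v by (simp add: of_nat_diff)
  finally have h: "pmf (round_step (K_V v) K_E \<theta> (c, r)) None =
     (1 + (real v - 2) * (\<theta> / (real v - 1) + (1 - \<theta>))) / (real v - 1)"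
    using cardS v by (simp add: of_nat_diff)
  show "pmf (round_step (K_V v) K_E \<theta> (c, r)) None = pK v \<theta>"
    unfolding h pK_def by (simp add: add_divide_distrib)
  show "set_pmf (round_step (K_V v) K_E \<theta> (c, r)) \<subseteq> insert None (Some ` GK v)"
  proof
    fix x assume "x \<in> set_pmf (round_step (K_V v) K_E \<theta> (c, r))"
    then obtain r' where r': "r' \<in> S" and x: "x \<in> set_pmf (if r' = c then return_pmf None else inner r')"
      unfolding rs using Sfin by auto
    show "x \<in> insert None (Some ` GK v)"
    proof (cases "r' = c")
      case True thus ?thesis using x by simp
    next
      case False
      have r'K: "r' \<in> K_V v" using r' by (simp add: S_def nbrs_K)
      from x False have "x \<in> set_pmf (inner r')" by simp
      then show ?thesis using inner_eq[OF r' False] Nc r'K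
        by (auto simp: GK_def nbrs_K split: if_splits)
    qed
  qed
qed


lemma state_K:
  assumes v: "v \<ge> 2" and th: "0 \<le> \<theta>" "\<theta> \<le> 1" and s: "s \<in> GK v"
  shows "pmf (state_after (K_V v) K_E \<theta> s n) None = 1 - (1 - pK v \<theta>) ^ n
       \<and> set_pmf (state_after (K_V v) K_E \<theta> s n) \<subseteq> insert None (Some ` GK v)"
proof (induction n)
  case 0
  then show ?case using s by simp
next
  case (Suc n)
  define M where "M = state_after (K_V v) K_E \<theta> s n"
  define f where "f = (\<lambda>st. case st of None \<Rightarrow> return_pmf None | Some t \<Rightarrow> round_step (K_V v) K_E \<theta> t)"
  have IH1: "pmf M None = 1 - (1 - pK v \<theta>) ^ n" and IH2: "set_pmf M \<subseteq> insert None (Some ` GK v)"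
    using Suc.IH by (auto simp: M_def)
  have eq: "state_after (K_V v) K_E \<theta> s (Suc n) = M \<bind> f" by (simp add: M_def f_def)
  have fst': "pmf (f st) None = pK v \<theta> + (1 - pK v \<theta>) * indicator {None} st"
    if "st \<in> set_pmf M" for st
  proof (cases st)
    case None thus ?thesis by (simp add: f_def)
  next
    case (Some t)
    have "t \<in> GK v" using that IH2 Some by auto
    then obtain a b where t: "t = (a, b)" "(a, b) \<in> GK v" by (cases t) auto
    show ?thesis using step_K(1)[OF v th t(2)] Some t by (simp add: f_def)
  qed
  have "pmf (M \<bind> f) None = (\<integral>st. pmf (f st) None \<partial>M)" by (rule pmf_bind)
  also have "\<dots> = (\<integral>st. pK v \<theta> + (1 - pK v \<theta>) * indicator {None} st \<partial>M)"
    by (rule integral_cong_AE) (auto simp: AE_measure_pmf_iff fst')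
  also have "\<dots> = pK v \<theta> + (1 - pK v \<theta>) * pmf M None"
  proof -
    have i1: "integrable M (\<lambda>st. (1 - pK v \<theta>) * indicator {None} st)"
      by (intro integrable_mult_right integrable_real_indicator)
         (auto simp: measure_pmf.emeasure_finite top.not_eq_extremum[symmetric])
    show ?thesis by (subst Bochner_Integration.integral_add[OF measure_pmf.integrable_const i1]) (simp add: measure_pmf_single)
  qed
  also have "\<dots> = 1 - (1 - pK v \<theta>) ^ Suc n" unfolding IH1 by (simp add: algebra_simps)
  finally have A: "pmf (M \<bind> f) None = 1 - (1 - pK v \<theta>) ^ Suc n" .
  have B: "set_pmf (M \<bind> f) \<subseteq> insert None (Some ` GK v)"
  proof
    fix x assume "x \<in> set_pmf (M \<bind> f)"
    then obtain st where st: "st \<in> set_pmf M" "x \<in> set_pmf (f st)" by auto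
    show "x \<in> insert None (Some ` GK v)"
    proof (cases st)
      case None thus ?thesis using st by (simp add: f_def)
    next
      case (Some t)
      have "t \<in> GK v" using st IH2 Some by auto
      then obtain a b where t: "t = (a, b)" "(a, b) \<in> GK v" by (cases t) auto
      show ?thesis using step_K(2)[OF v th t(2)] Some t st by (auto simp: f_def)
    qed
  qed
  show ?case using A B eq by simp
qed

lemma pK_eq:
  assumes v: "v \<ge> 2"
  shows "pK v \<theta> = ((real v - 1)^2 - \<theta> * (real v - 2)^2) / (real v - 1)^2"
proof -
  define w where "w = real v - 1"
  have w2: "w > 0" using v by (simp add: w_def)
  have "real v - 2 = w - 1" "real v - 1 = w" by (simp_all add: w_def)
  then show ?thesis using w2 unfolding pK_def
    by (simp add: field_simps power2_eq_square)
qed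

theorem mainTheorem3:
  fixes v :: nat and \<theta> :: real and c r :: nat
  assumes "v \<ge> 2" and "0 \<le> \<theta>" and "\<theta> \<le> 1"
    and "c \<in> K_V v" and "r \<in> K_V v" and "c \<noteq> r"
  shows "(capture_time_prob (K_V v) K_E \<theta> (c, r)) sums 1
    \<and> (\<lambda>n. real n * capture_time_prob (K_V v) K_E \<theta> (c, r) n) sums
        (1 / (1 / (real v - 1) + (real v - 2) / (real v - 1) * (1 / (real v - 1) * \<theta> + 1 - \<theta>)))
    \<and> 1 / (1 / (real v - 1) + (real v - 2) / (real v - 1) * (1 / (real v - 1) * \<theta> + 1 - \<theta>))
        = (real v - 1)^2 / ((real v - 1)^2 - \<theta> * (real v - 2)^2)"
proof -
  define p where "p = pK v \<theta>"
  define q where "q = 1 - p"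
  have s: "(c, r) \<in> GK v" using assms by (simp add: GK_def)
  have w: "real v - 1 \<ge> 1" using assms(1) by simp
  have sq: "(real v - 2)^2 < (real v - 1)^2"
    using w by (simp add: power2_eq_square algebra_simps)
  have t1: "\<theta> * (real v - 2)^2 \<le> (real v - 2)^2"
    using assms(2,3) by (intro mult_left_le_one_le) auto
  have t0: "0 \<le> \<theta> * (real v - 2)^2" using assms(2) by simp
  have pe: "p = ((real v - 1)^2 - \<theta> * (real v - 2)^2) / (real v - 1)^2"
    unfolding p_def by (rule pK_eq[OF assms(1)])
  have ppos: "p > 0" unfolding pe using sq t1 w by (intro divide_pos_pos) auto
  have ple: "p \<le> 1" unfolding pe using t0 w by (simp add: divide_le_eq_1)
  have qn: "norm q < 1" unfolding q_def using ppos ple by simp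
  have cb: "captured_by (K_V v) K_E \<theta> (c, r) n = 1 - q ^ n" for n
    using state_K[OF assms(1-3) s, of n] by (simp add: captured_by_def q_def p_def)
  have ct0: "capture_time_prob (K_V v) K_E \<theta> (c, r) 0 = 0" by (simp add: capture_time_prob_def)
  have ctS: "capture_time_prob (K_V v) K_E \<theta> (c, r) (Suc n) = p * q ^ n" for n
    by (simp add: capture_time_prob_def cb q_def algebra_simps)
  have g1: "(\<lambda>n. p * q ^ n) sums (p * (1 / (1 - q)))"
    by (rule sums_mult[OF geometric_sums[OF qn]])
  have S1: "capture_time_prob (K_V v) K_E \<theta> (c, r) sums 1"
  proof -
    have "(\<lambda>n. capture_time_prob (K_V v) K_E \<theta> (c, r) (Suc n)) sums 1"
      using g1 ppos by (simp add: ctS q_def)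
    thus ?thesis using sums_Suc_iff[of "capture_time_prob (K_V v) K_E \<theta> (c, r)" 1] ct0 by simp
  qed
  have g2: "(\<lambda>n. p * (of_nat (Suc n) * q ^ n)) sums (p * (1 / (1 - q)^2))"
    by (rule sums_mult[OF geometric_deriv_sums[OF qn]])
  have S2: "(\<lambda>n. real n * capture_time_prob (K_V v) K_E \<theta> (c, r) n) sums (1 / p)"
  proof -
    have "(\<lambda>n. real (Suc n) * capture_time_prob (K_V v) K_E \<theta> (c, r) (Suc n)) sums (1 / p)"
      using g2 ppos by (simp add: ctS q_def power2_eq_square algebra_simps)
    thus ?thesis using sums_Suc_iff[of "\<lambda>n. real n * capture_time_prob (K_V v) K_E \<theta> (c, r) n" "1/p"]
      by simp
  qed
  have E: "1 / p = (real v - 1)^2 / ((real v - 1)^2 - \<theta> * (real v - 2)^2)"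
    unfolding pe by simp
  show ?thesis using S1 S2 E unfolding p_def pK_def by simp
qed

end
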